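(* Let $g \in L^2(\mathbb{R})$ with $\|g\|_2 = 1$ and $\Lambda = \{(a_k,b_k)\}_{k=1}^N \subset \mathbb{R}^2$, and assume that $\mathcal{G}(g,\Lambda) = \{M_{b_k}T_{a_k} g\}_{k=1}^N$ is linearly independent. Let $G_N = (\langle M_{b_k}T_{a_k} g, M_{b_\ell}T_{a_\ell} g\rangle)_{k,\ell=1}^N$ (positive definite), for $(a,b)\in\mathbb{R}^2$ let $u(a,b)\in\mathbb{C}^N$ have entries $u(a,b)_k = e^{-2\pi i a_k(b-b_k)}V_g g(a-a_k,b-b_k)$, and let $F(a,b) = \langle G_N^{-1}u(a,b),u(a,b)\rangle$. For $(a,b)\in\mathbb{R}^2$ let $\Lambda' = \Lambda\cup\{(a,b)\}$. Then $\mathcal{G}(g,\Lambda')$ is linearly independent if and only if $F(a,b) < 1$. Furthermore, there exists $R = R(\Lambda,g) > 0$ such that for all $(a,b)\in\mathbb{R}^2$ with $|(a,b)| > R$, $\mathcal{G}(g,\Lambda\cup\{(a,b)\})$ is linearly independent.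
   Context: $M_b f(x) = e^{2\pi i b x} f(x)$, $T_a f(x) = f(x-a)$, and for a finite set $\Lambda=\{(a_k,b_k)\}\subset\mathbb{R}^2$, $\mathcal{G}(g,\Lambda) = \{M_{b_k}T_{a_k}g\}$. The short-time Fourier transform is $V_g f(x,y) = \int_{\mathbb{R}} f(t)\overline{g(t-x)} e^{-2\pi i y t}\,dt$. Inner products are linear in the first argument. *)

theory Defs
  imports "HOL-Analysis.Analysis"
begin

definition modulation :: "real \<Rightarrow> (real \<Rightarrow> complex) \<Rightarrow> real \<Rightarrow> complex" where
  "modulation b f x = exp (2 * complex_of_real pi * \<i> * complex_of_real (b * x)) * f x"

definition translation :: "real \<Rightarrow> (real \<Rightarrow> complex) \<Rightarrow> real \<Rightarrow> complex" where
  "translation a f x = f (x - a)"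

definition gabor :: "(real \<Rightarrow> complex) \<Rightarrow> ('i \<Rightarrow> real \<times> real) \<Rightarrow> 'i \<Rightarrow> real \<Rightarrow> complex" where
  "gabor g \<Lambda> k = modulation (snd (\<Lambda> k)) (translation (fst (\<Lambda> k)) g)"

definition inner_L2 :: "(real \<Rightarrow> complex) \<Rightarrow> (real \<Rightarrow> complex) \<Rightarrow> complex" where
  "inner_L2 f h = (LINT t|lborel. f t * cnj (h t))"

definition stft :: "(real \<Rightarrow> complex) \<Rightarrow> (real \<Rightarrow> complex) \<Rightarrow> real \<Rightarrow> real \<Rightarrow> complex" where
  "stft g f x y = (LINT t|lborel. f t * cnj (g (t - x)) * exp (- 2 * complex_of_real pi * \<i> * complex_of_real (y * t)))"

definition lin_indep_L2 :: "('i::finite \<Rightarrow> real \<Rightarrow> complex) \<Rightarrow> bool" where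
  "lin_indep_L2 \<phi> \<longleftrightarrow>
     (\<forall>c :: 'i \<Rightarrow> complex. (AE t in lborel. (\<Sum>i\<in>UNIV. c i * \<phi> i t) = 0) \<longrightarrow> (\<forall>i. c i = 0))"

definition gram :: "(real \<Rightarrow> complex) \<Rightarrow> ('n::finite \<Rightarrow> real \<times> real) \<Rightarrow> complex ^'n^'n" where
  "gram g \<Lambda> = (\<chi> k l. inner_L2 (gabor g \<Lambda> k) (gabor g \<Lambda> l))"

definition uvec :: "(real \<Rightarrow> complex) \<Rightarrow> ('n::finite \<Rightarrow> real \<times> real) \<Rightarrow> real \<Rightarrow> real \<Rightarrow> complex ^'n" where
  "uvec g \<Lambda> a b = (\<chi> k. exp (- 2 * complex_of_real pi * \<i> * complex_of_real (fst (\<Lambda> k) * (b - snd (\<Lambda> k))))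
                          * stft g g (a - fst (\<Lambda> k)) (b - snd (\<Lambda> k)))"

definition Ffun :: "(real \<Rightarrow> complex) \<Rightarrow> ('n::finite \<Rightarrow> real \<times> real) \<Rightarrow> real \<Rightarrow> real \<Rightarrow> complex" where
  "Ffun g \<Lambda> a b = (let u = uvec g \<Lambda> a b; v = matrix_inv (gram g \<Lambda>) *v u
                    in (\<Sum>k\<in>UNIV. v $ k * cnj (u $ k)))"

definition extend_pts :: "('n \<Rightarrow> real \<times> real) \<Rightarrow> real \<times> real \<Rightarrow> 'n option \<Rightarrow> real \<times> real" where
  "extend_pts \<Lambda> p = case_option p \<Lambda>"

end

theory Submission
  imports Defs
begin

definition sqi :: "(real \<Rightarrow> complex) \<Rightarrow> bool" where
  "sqi f \<longleftrightarrow> f \<in> borel_measurable lborel \<and> integrable lborel (\<lambda>t. (cmod (f t))\<^sup>2)"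

lemma borel_measurable_cnj' [measurable (raw)]:
  "f \<in> borel_measurable M \<Longrightarrow> (\<lambda>x. cnj (f x)) \<in> borel_measurable M"
  by (rule borel_measurable_continuous_on) (auto intro: continuous_intros)

lemma sqiD: assumes "sqi f" shows "f \<in> borel_measurable lborel" "integrable lborel (\<lambda>t. (cmod (f t))\<^sup>2)"
  using assms by (auto simp: sqi_def)

lemma amgm: "(a::real) > 0 \<Longrightarrow> x * y \<le> (a * x\<^sup>2 + y\<^sup>2 / a) / 2"
proof -
  assume a: "a > 0"
  have "0 \<le> (a * x - y)\<^sup>2 / a" using a by simp
  also have "(a * x - y)\<^sup>2 / a = a * x\<^sup>2 + y\<^sup>2 / a - 2 * x * y" using a
    by (simp add: power2_eq_square field_simps)
  finally show ?thesis by simp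
qed

lemma sq_sum_le: "((a::real) + b)\<^sup>2 \<le> 2 * a\<^sup>2 + 2 * b\<^sup>2"
proof -
  have "0 \<le> (a - b)\<^sup>2" by simp
  thus ?thesis by (simp add: power2_eq_square algebra_simps)
qed

lemma integrable_norm_prod:
  assumes "sqi f" "sqi h"
  shows "integrable lborel (\<lambda>t. cmod (f t) * cmod (h t))"
proof (rule Bochner_Integration.integrable_bound)
  show "integrable lborel (\<lambda>t. ((cmod (f t))\<^sup>2 + (cmod (h t))\<^sup>2) / 2)"
    using assms by (auto simp: sqi_def)
  show "(\<lambda>t. cmod (f t) * cmod (h t)) \<in> borel_measurable lborel"
    using assms by (auto simp: sqi_def)
  show "AE t in lborel. norm (cmod (f t) * cmod (h t)) \<le> norm (((cmod (f t))\<^sup>2 + (cmod (h t))\<^sup>2) / 2)"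
    using amgm[of 1] by (auto simp: abs_mult)
qed

lemma integrable_prod:
  assumes "sqi f" "sqi h"
  shows "integrable lborel (\<lambda>t. f t * cnj (h t))"
proof (rule Bochner_Integration.integrable_bound)
  show "integrable lborel (\<lambda>t. cmod (f t) * cmod (h t))"
    using integrable_norm_prod[OF assms] .
  show "(\<lambda>t. f t * cnj (h t)) \<in> borel_measurable lborel"
    using assms by (auto simp: sqi_def)
  show "AE t in lborel. norm (f t * cnj (h t)) \<le> norm (cmod (f t) * cmod (h t))"
    by (auto simp: norm_mult)
qed

lemma amgm_integral:
  assumes "sqi f" "sqi h" "a > 0"
  shows "(LINT t|lborel. cmod (f t) * cmod (h t)) \<le>
     (a * (LINT t|lborel. (cmod (f t))\<^sup>2) + (LINT t|lborel. (cmod (h t))\<^sup>2) / a) / 2"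
proof -
  have "(LINT t|lborel. cmod (f t) * cmod (h t)) \<le> (LINT t|lborel. (a * (cmod (f t))\<^sup>2 + (cmod (h t))\<^sup>2 / a) / 2)"
    apply (rule integral_mono)
    using assms integrable_norm_prod[OF assms(1,2)] amgm[OF assms(3)] by (auto simp: sqi_def)
  also have "\<dots> = (a * (LINT t|lborel. (cmod (f t))\<^sup>2) + (LINT t|lborel. (cmod (h t))\<^sup>2) / a) / 2"
    using assms by (simp add: sqi_def)
  finally show ?thesis .
qed

lemma sqi_add: assumes "sqi f" "sqi h" shows "sqi (\<lambda>t. f t + h t)"
  unfolding sqi_def
proof
  show "(\<lambda>t. f t + h t) \<in> borel_measurable lborel" using assms by (auto simp: sqi_def)
  show "integrable lborel (\<lambda>t. (cmod (f t + h t))\<^sup>2)"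
  proof (rule Bochner_Integration.integrable_bound)
    show "integrable lborel (\<lambda>t. 2 * (cmod (f t))\<^sup>2 + 2 * (cmod (h t))\<^sup>2)"
      using assms by (auto simp: sqi_def)
    show "(\<lambda>t. (cmod (f t + h t))\<^sup>2) \<in> borel_measurable lborel" using assms by (auto simp: sqi_def)
    show "AE t in lborel. norm ((cmod (f t + h t))\<^sup>2) \<le> norm (2 * (cmod (f t))\<^sup>2 + 2 * (cmod (h t))\<^sup>2)"
    proof (rule AE_I2)
      fix t
      have "cmod (f t + h t) \<le> cmod (f t) + cmod (h t)" by (rule norm_triangle_ineq)
      hence "(cmod (f t + h t))\<^sup>2 \<le> (cmod (f t) + cmod (h t))\<^sup>2" by (simp add: power_mono)
      also have "\<dots> \<le> 2 * (cmod (f t))\<^sup>2 + 2 * (cmod (h t))\<^sup>2"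
        by (rule sq_sum_le)
      finally show "norm ((cmod (f t + h t))\<^sup>2) \<le> norm (2 * (cmod (f t))\<^sup>2 + 2 * (cmod (h t))\<^sup>2)" by simp
    qed
  qed
qed

lemma sqi_scale: assumes "sqi f" shows "sqi (\<lambda>t. c * f t)"
  using assms by (auto simp: sqi_def norm_mult power_mult_distrib)

lemma sqi_unimod: assumes "sqi f" "e \<in> borel_measurable lborel" "\<And>t. cmod (e t) = 1"
  shows "sqi (\<lambda>t. e t * f t)"
  using assms by (auto simp: sqi_def norm_mult power_mult_distrib)

lemma sqi_cnj: assumes "sqi f" shows "sqi (\<lambda>t. cnj (f t))"
  using assms by (auto simp: sqi_def)

lemma sqi_sum: assumes "finite I" "\<And>i. i \<in> I \<Longrightarrow> sqi (f i)" shows "sqi (\<lambda>t. \<Sum>i\<in>I. f i t)"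
  using assms
proof (induction I rule: finite_induct)
  case empty then show ?case by (simp add: sqi_def)
next
  case (insert x F) then show ?case by (auto intro!: sqi_add)
qed

lemma sqi_minus: assumes "sqi f" "sqi h" shows "sqi (\<lambda>t. f t - h t)"
  using sqi_add[OF assms(1) sqi_scale[OF assms(2), of "-1"]] by simp

lemma lborel_shift_integral:
  fixes f :: "real \<Rightarrow> 'a::{banach, second_countable_topology}"
  shows "(LINT t|lborel. f (t + c)) = (LINT t|lborel. f t)"
  using lborel_integral_real_affine[of 1 f c] by (simp add: add.commute)

lemma lborel_shift_integrable: "integrable lborel (\<lambda>t. f (t + c)) \<longleftrightarrow> integrable lborel (f :: real \<Rightarrow> 'a::{banach, second_countable_topology})"
  using lborel_integrable_real_affine_iff[of 1 f c] by (simp add: add.commute)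

lemma sqi_shift: assumes "sqi f" shows "sqi (\<lambda>t. f (t + c))"
  using assms unfolding sqi_def
  by (auto simp: lborel_shift_integrable[of "\<lambda>t. (cmod (f t))\<^sup>2"])


definition E :: "real \<Rightarrow> complex" where
  "E r = exp (2 * complex_of_real pi * \<i> * complex_of_real r)"

lemma E_alt: "E r = exp (\<i> * complex_of_real (2 * pi * r))"
  by (simp add: E_def algebra_simps)

lemma E_add: "E r * E s = E (r + s)"
  by (simp add: E_def exp_add[symmetric] algebra_simps)

lemma E_cnj: "cnj (E r) = E (- r)"
  by (simp add: E_def exp_cnj)

lemma E_neg: "exp (- 2 * complex_of_real pi * \<i> * complex_of_real r) = E (- r)"
  by (simp add: E_def)

lemma E_cong: "r = s \<Longrightarrow> E r = E s" by simp

lemma E_norm [simp]: "cmod (E r) = 1"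
  unfolding E_alt by (rule norm_exp_i_times)

lemma E_meas [measurable]: "(\<lambda>t. E (f t)) \<in> borel_measurable M" if "f \<in> borel_measurable M"
  using that unfolding E_def by measurable

lemma gabor_eq: "gabor g \<Lambda> k t = E (snd (\<Lambda> k) * t) * g (t - fst (\<Lambda> k))"
  by (simp add: gabor_def modulation_def translation_def E_def)

lemma sqi_mod_trans: assumes "sqi g" shows "sqi (\<lambda>t. E (b * t) * g (t - a))"
proof -
  have "sqi (\<lambda>t. g (t + (- a)))" by (rule sqi_shift[OF assms])
  hence "sqi (\<lambda>t. g (t - a))" by simp
  thus ?thesis by (rule sqi_unimod) auto
qed

lemma sqi_gabor: assumes "sqi g" shows "sqi (gabor g \<Lambda> k)"
  using sqi_mod_trans[OF assms] by (simp add: gabor_eq[abs_def])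

lemma norm_mod_trans: assumes "sqi g"
  shows "(LINT t|lborel. (cmod (E (b * t) * g (t - a)))\<^sup>2) = (LINT t|lborel. (cmod (g t))\<^sup>2)"
proof -
  have "(LINT t|lborel. (cmod (E (b * t) * g (t - a)))\<^sup>2) = (LINT t|lborel. (cmod (g (t + (-a))))\<^sup>2)"
    by (simp add: norm_mult)
  also have "\<dots> = (LINT t|lborel. (cmod (g t))\<^sup>2)"
    by (rule lborel_shift_integral[of "\<lambda>t. (cmod (g t))\<^sup>2"])
  finally show ?thesis .
qed

lemma inner_cnj: "cnj (inner_L2 f h) = inner_L2 h f"
proof -
  have "cnj (inner_L2 f h) = (LINT t|lborel. cnj (f t * cnj (h t)))"
    unfolding inner_L2_def by (rule Bochner_Integration.integral_cnj[symmetric])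
  also have "\<dots> = inner_L2 h f" unfolding inner_L2_def by (simp add: mult.commute)
  finally show ?thesis .
qed

lemma inner_self: "inner_L2 f f = complex_of_real (LINT t|lborel. (cmod (f t))\<^sup>2)"
proof -
  have "(\<lambda>t. f t * cnj (f t)) = (\<lambda>t. complex_of_real ((cmod (f t))\<^sup>2))"
    by (simp only: complex_norm_square)
  thus ?thesis unfolding inner_L2_def by (simp only: integral_complex_of_real)
qed

lemma inner_sum_left:
  assumes "finite I" "\<And>i. i \<in> I \<Longrightarrow> sqi (f i)" "sqi h"
  shows "inner_L2 (\<lambda>t. \<Sum>i\<in>I. c i * f i t) h = (\<Sum>i\<in>I. c i * inner_L2 (f i) h)"
proof -
  have "inner_L2 (\<lambda>t. \<Sum>i\<in>I. c i * f i t) h = (LINT t|lborel. (\<Sum>i\<in>I. c i * (f i t * cnj (h t))))"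
    unfolding inner_L2_def by (simp add: sum_distrib_right mult.assoc)
  also have "\<dots> = (\<Sum>i\<in>I. (LINT t|lborel. c i * (f i t * cnj (h t))))"
    by (rule Bochner_Integration.integral_sum[of I lborel "\<lambda>i t. c i * (f i t * cnj (h t))"])
       (use assms integrable_prod in auto)
  also have "\<dots> = (\<Sum>i\<in>I. c i * inner_L2 (f i) h)"
    unfolding inner_L2_def by simp
  finally show ?thesis .
qed

lemma inner_sum_right:
  assumes "finite I" "\<And>i. i \<in> I \<Longrightarrow> sqi (f i)" "sqi h"
  shows "inner_L2 h (\<lambda>t. \<Sum>i\<in>I. c i * f i t) = (\<Sum>i\<in>I. cnj (c i) * inner_L2 h (f i))"
proof -
  have "inner_L2 h (\<lambda>t. \<Sum>i\<in>I. c i * f i t) = cnj (inner_L2 (\<lambda>t. \<Sum>i\<in>I. c i * f i t) h)"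
    by (simp add: inner_cnj)
  also have "\<dots> = cnj (\<Sum>i\<in>I. c i * inner_L2 (f i) h)"
    by (simp add: inner_sum_left assms)
  also have "\<dots> = (\<Sum>i\<in>I. cnj (c i) * inner_L2 h (f i))"
    by (simp add: inner_cnj)
  finally show ?thesis .
qed

lemma inner_diff_left:
  assumes "sqi f" "sqi f'" "sqi h"
  shows "inner_L2 (\<lambda>t. f t - f' t) h = inner_L2 f h - inner_L2 f' h"
  unfolding inner_L2_def using assms integrable_prod
  by (simp add: left_diff_distrib)

lemma inner_diff_right:
  assumes "sqi f" "sqi h" "sqi h'"
  shows "inner_L2 f (\<lambda>t. h t - h' t) = inner_L2 f h - inner_L2 f h'"
  unfolding inner_L2_def using assms integrable_prod
  by (simp add: right_diff_distrib)

lemma inner_AE_right: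
  assumes "sqi f" "sqi h" "sqi h'" "AE t in lborel. h t = h' t"
  shows "inner_L2 f h = inner_L2 f h'"
  unfolding inner_L2_def
  by (rule integral_cong_AE) (use assms in \<open>auto simp: sqi_def elim: AE_mp\<close>)

lemma norm_zero_AE:
  assumes "sqi f" "(LINT t|lborel. (cmod (f t))\<^sup>2) = 0"
  shows "AE t in lborel. f t = 0"
proof -
  have "AE t in lborel. (cmod (f t))\<^sup>2 = 0"
    using assms integral_nonneg_eq_0_iff_AE[where f="\<lambda>t. (cmod (f t))\<^sup>2" and M=lborel]
    by (auto simp: sqi_def)
  thus ?thesis by auto
qed

lemma sum_option_UNIV:
  "(\<Sum>x\<in>(UNIV :: 'n::finite option set). F x) = F None + (\<Sum>k\<in>UNIV. F (Some k))"
proof -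
  have "(UNIV :: 'n option set) = insert None (Some ` UNIV)" by (rule UNIV_option_conv)
  hence "(\<Sum>x\<in>(UNIV :: 'n::finite option set). F x) = (\<Sum>x\<in>insert None (Some ` UNIV). F x)" by simp
  also have "\<dots> = F None + (\<Sum>x\<in>Some ` UNIV. F x)" by (subst sum.insert) auto
  also have "(\<Sum>x\<in>Some ` UNIV. F x) = (\<Sum>k\<in>UNIV. F (Some k))" by (subst sum.reindex) auto
  finally show ?thesis .
qed

lemma gabor_ext_Some: "gabor g (extend_pts \<Lambda> p) (Some k) = gabor g \<Lambda> k"
  by (simp add: gabor_def extend_pts_def)

lemma gabor_ext_None: "gabor g (extend_pts \<Lambda> (a, b)) None = (\<lambda>t. E (b * t) * g (t - a))"
  by (simp add: gabor_eq[abs_def] extend_pts_def)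


lemma u_eq:
  assumes "sqi g"
  shows "uvec g \<Lambda> a b $ k = cnj (inner_L2 (\<lambda>t. E (b * t) * g (t - a)) (gabor g \<Lambda> k))"
proof -
  obtain ak bk where L: "\<Lambda> k = (ak, bk)" by force
  define \<Phi> where "\<Phi> t = E (- ((b - bk) * t)) * (g (t - ak) * cnj (g (t - a)))" for t
  have "cnj (inner_L2 (\<lambda>t. E (b * t) * g (t - a)) (gabor g \<Lambda> k))
     = (LINT t|lborel. E (bk * t) * g (t - ak) * cnj (E (b * t) * g (t - a)))"
    unfolding inner_cnj unfolding inner_L2_def by (simp add: gabor_eq L)
  also have "\<dots> = (LINT t|lborel. \<Phi> t)"
  proof (rule Bochner_Integration.integral_cong[OF refl])
    fix t
    have "E (bk * t) * g (t - ak) * cnj (E (b * t) * g (t - a))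
        = (E (- (b * t)) * E (bk * t)) * (g (t - ak) * cnj (g (t - a)))"
      by (simp add: E_cnj mult_ac)
    also have "E (- (b * t)) * E (bk * t) = E (- ((b - bk) * t))"
      by (simp add: E_add algebra_simps)
    finally show "E (bk * t) * g (t - ak) * cnj (E (b * t) * g (t - a)) = \<Phi> t"
      by (simp add: \<Phi>_def)
  qed
  also have "\<dots> = (LINT t|lborel. \<Phi> (t + ak))"
    by (rule lborel_shift_integral[symmetric])
  also have "\<dots> = (LINT t|lborel. E (- (ak * (b - bk))) * (g t * cnj (g (t - (a - ak))) * E (- ((b - bk) * t))))"
  proof (rule Bochner_Integration.integral_cong[OF refl])
    fix t
    have "E (- ((b - bk) * (t + ak))) = E (- (ak * (b - bk))) * E (- ((b - bk) * t))"
      by (simp add: E_add algebra_simps)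
    moreover have "t + ak - a = t - (a - ak)" by simp
    ultimately show "\<Phi> (t + ak) = E (- (ak * (b - bk))) * (g t * cnj (g (t - (a - ak))) * E (- ((b - bk) * t)))"
      unfolding \<Phi>_def by (simp add: mult_ac diff_diff_eq2)
  qed
  also have "\<dots> = E (- (ak * (b - bk))) * (LINT t|lborel. g t * cnj (g (t - (a - ak))) * E (- ((b - bk) * t)))"
    by simp
  also have "\<dots> = uvec g \<Lambda> a b $ k"
    unfolding uvec_def stft_def E_neg by (simp add: L)
  finally show ?thesis by simp
qed

lemma gram_entry: "gram g \<Lambda> $ k $ l = inner_L2 (gabor g \<Lambda> k) (gabor g \<Lambda> l)"
  by (simp add: gram_def)

lemma gram_herm: "cnj (gram g \<Lambda> $ k $ l) = gram g \<Lambda> $ l $ k"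
  by (simp add: gram_def inner_cnj)

lemma gram_mult:
  assumes "sqi g"
  shows "(gram g \<Lambda> *v z) $ k = inner_L2 (gabor g \<Lambda> k) (\<lambda>t. \<Sum>l\<in>UNIV. cnj (z $ l) * gabor g \<Lambda> l t)"
  by (simp add: matrix_vector_mult_def gram_def inner_sum_right sqi_gabor assms mult.commute)

lemma gram_inj:
  assumes "sqi g" "lin_indep_L2 (gabor g \<Lambda>)" "gram g \<Lambda> *v z = 0"
  shows "z = 0"
proof -
  define \<phi> where "\<phi> t = (\<Sum>l\<in>UNIV. cnj (z $ l) * gabor g \<Lambda> l t)" for t
  have sq: "sqi \<phi>" unfolding \<phi>_def[abs_def]
    by (intro sqi_sum sqi_scale sqi_gabor assms) simp
  have 0: "inner_L2 (gabor g \<Lambda> k) \<phi> = 0" for k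
    using gram_mult[OF assms(1), of \<Lambda> z k] assms(3) by (simp add: \<phi>_def[abs_def])
  have "inner_L2 \<phi> \<phi> = (\<Sum>l\<in>UNIV. cnj (z $ l) * inner_L2 (gabor g \<Lambda> l) \<phi>)"
    unfolding \<phi>_def[abs_def] by (rule inner_sum_left) (use sq assms sqi_gabor in \<open>auto simp: \<phi>_def[abs_def]\<close>)
  also have "\<dots> = 0" by (simp add: 0)
  finally have "(LINT t|lborel. (cmod (\<phi> t))\<^sup>2) = 0" by (simp add: inner_self)
  hence "AE t in lborel. \<phi> t = 0" by (rule norm_zero_AE[OF sq])
  hence "\<forall>l. cnj (z $ l) = 0" using assms(2) unfolding lin_indep_L2_def \<phi>_def
    by (erule_tac x="\<lambda>l. cnj (z $ l)" in allE) simp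
  thus "z = 0" by (simp add: vec_eq_iff)
qed

lemma gram_invertible:
  assumes "sqi g" "lin_indep_L2 (gabor g \<Lambda>)"
  shows "invertible (gram g \<Lambda>)"
proof -
  let ?G = "gram g \<Lambda>"
  have "inj ((*v) ?G)"
  proof (rule injI)
    fix x y assume "?G *v x = ?G *v y"
    hence "?G *v (x - y) = 0" by (simp add: matrix_vector_mult_diff_distrib)
    hence "x - y = 0" by (rule gram_inj[OF assms])
    thus "x = y" by simp
  qed
  hence "det (matrix ((*v) ?G)) \<noteq> 0"
    using det_nz_iff_inj_gen[of "(*v) ?G"] matrix_vector_mul_linear_gen by blast
  thus ?thesis by (simp add: invertible_det_nz)
qed


lemma sum_ext:
  fixes \<Lambda> :: "'n::finite \<Rightarrow> real \<times> real"
  shows "(\<Sum>x\<in>UNIV. c x * gabor g (extend_pts \<Lambda> (a, b)) x t)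
   = c None * (E (b * t) * g (t - a)) + (\<Sum>k\<in>UNIV. c (Some k) * gabor g \<Lambda> k t)"
  by (subst sum_option_UNIV) (simp add: gabor_ext_None gabor_ext_Some)

lemma part1:
  fixes g :: "real \<Rightarrow> complex" and \<Lambda> :: "'n::finite \<Rightarrow> real \<times> real"
  assumes sg: "sqi g" and n1: "(LINT t|lborel. (cmod (g t))\<^sup>2) = 1"
    and li: "lin_indep_L2 (gabor g \<Lambda>)"
  shows "lin_indep_L2 (gabor g (extend_pts \<Lambda> (a, b))) \<longleftrightarrow> Re (Ffun g \<Lambda> a b) < 1"
proof -
  define f where "f t = E (b * t) * g (t - a)" for t
  define fk where "fk = gabor g \<Lambda>"
  define G where "G = gram g \<Lambda>"
  define u where "u = uvec g \<Lambda> a b"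
  define v where "v = matrix_inv G *v u"
  define \<alpha> where "\<alpha> l = cnj (v $ l)" for l
  define h where "h t = (\<Sum>l\<in>UNIV. \<alpha> l * fk l t)" for t
  define d where "d t = f t - h t" for t
  define F where "F = Ffun g \<Lambda> a b"
  have sf: "sqi f" unfolding f_def[abs_def] by (rule sqi_mod_trans[OF sg])
  have sk: "\<And>k. sqi (fk k)" unfolding fk_def by (rule sqi_gabor[OF sg])
  have sh: "sqi h" unfolding h_def[abs_def] by (intro sqi_sum sqi_scale sk) simp
  have sd: "sqi d" unfolding d_def[abs_def] by (rule sqi_minus[OF sf sh])
  have Gv: "G *v v = u"
  proof -
    have "invertible G" unfolding G_def by (rule gram_invertible[OF sg li])
    hence "G ** matrix_inv G = mat 1"
      using someI_ex[of "\<lambda>A'. G ** A' = mat 1 \<and> A' ** G = mat 1"]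
      unfolding invertible_def matrix_inv_def by blast
    thus ?thesis unfolding v_def by (simp add: matrix_vector_mul_assoc)
  qed
  have uk: "u $ k = cnj (inner_L2 f (fk k))" for k
    using u_eq[OF sg] by (simp add: u_def f_def[abs_def] fk_def)
  have hk: "inner_L2 h (fk k) = inner_L2 f (fk k)" for k
  proof -
    have "inner_L2 h (fk k) = (\<Sum>l\<in>UNIV. \<alpha> l * inner_L2 (fk l) (fk k))"
      unfolding h_def[abs_def] by (rule inner_sum_left) (auto simp: sk)
    also have "\<dots> = (\<Sum>l\<in>UNIV. cnj (v $ l) * cnj (G $ k $ l))"
      unfolding \<alpha>_def G_def fk_def gram_entry by (simp add: inner_cnj)
    also have "\<dots> = cnj (\<Sum>l\<in>UNIV. G $ k $ l * v $ l)"
      by (simp add: mult.commute)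
    also have "(\<Sum>l\<in>UNIV. G $ k $ l * v $ l) = (G *v v) $ k" by (simp add: matrix_vector_mult_def)
    also have "\<dots> = u $ k" by (simp add: Gv)
    finally show ?thesis by (simp add: uk)
  qed
  have dk: "inner_L2 d (fk k) = 0" for k
    unfolding d_def[abs_def] by (simp add: inner_diff_left sf sh sk hk)
  have dh: "inner_L2 d h = 0"
    unfolding h_def[abs_def] by (subst inner_sum_right) (auto simp: sk sd dk)
  have ff: "inner_L2 f f = 1"
    unfolding inner_self f_def using norm_mod_trans[OF sg, of b a] n1 by simp
  have hf: "inner_L2 h f = cnj F"
  proof -
    have "inner_L2 h f = (\<Sum>l\<in>UNIV. \<alpha> l * inner_L2 (fk l) f)"
      unfolding h_def[abs_def] by (rule inner_sum_left) (auto simp: sk sf)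
    also have "\<dots> = (\<Sum>l\<in>UNIV. cnj (v $ l) * u $ l)"
      by (simp add: \<alpha>_def uk inner_cnj)
    also have "\<dots> = cnj F"
      by (simp add: F_def Ffun_def Let_def G_def u_def v_def)
    finally show ?thesis .
  qed
  define D where "D = (LINT t|lborel. (cmod (d t))\<^sup>2)"
  have D0: "D \<ge> 0" unfolding D_def by simp
  have dd: "inner_L2 d d = 1 - cnj F"
  proof -
    have "inner_L2 d d = inner_L2 d f - inner_L2 d h"
      by (subst (2) d_def[abs_def]) (rule inner_diff_right[OF sd sf sh])
    also have "\<dots> = inner_L2 d f" by (simp add: dh)
    also have "\<dots> = inner_L2 f f - inner_L2 h f"
      unfolding d_def[abs_def] by (rule inner_diff_left[OF sf sh sf])
    finally show ?thesis by (simp add: ff hf)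
  qed
  have ReF: "Re F = 1 - D"
  proof -
    have "complex_of_real D = 1 - cnj F" using dd by (simp add: inner_self D_def)
    hence "Re (complex_of_real D) = Re (1 - cnj F)" by simp
    thus ?thesis by simp
  qed
  have Dzero: "D = 0 \<longleftrightarrow> (AE t in lborel. d t = 0)"
  proof
    assume "D = 0" thus "AE t in lborel. d t = 0" using norm_zero_AE[OF sd] by (simp add: D_def)
  next
    assume A0: "AE t in lborel. d t = 0"
    have "D = (LINT (t::real)|lborel. (0::real))" unfolding D_def
    proof (rule integral_cong_AE)
      show "(\<lambda>t. (cmod (d t))\<^sup>2) \<in> borel_measurable lborel" using sd by (auto simp: sqi_def)
      show "(\<lambda>t. 0::real) \<in> borel_measurable lborel" by simp
      show "AE t in lborel. (cmod (d t))\<^sup>2 = 0" using A0 by (rule eventually_mono) simp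
    qed
    thus "D = 0" by simp
  qed
  have key: "Re F < 1 \<longleftrightarrow> \<not> (AE t in lborel. d t = 0)"
    using ReF D0 Dzero by auto
  have "lin_indep_L2 (gabor g (extend_pts \<Lambda> (a, b))) \<longleftrightarrow> \<not> (AE t in lborel. d t = 0)"
  proof
    assume LI: "lin_indep_L2 (gabor g (extend_pts \<Lambda> (a, b)))"
    show "\<not> (AE t in lborel. d t = 0)"
    proof
      assume A0: "AE t in lborel. d t = 0"
      define c where "c x = (case x of None \<Rightarrow> 1 | Some l \<Rightarrow> - \<alpha> l)" for x
      have "(\<Sum>x\<in>UNIV. c x * gabor g (extend_pts \<Lambda> (a, b)) x t) = d t" for t
        by (simp add: sum_ext c_def d_def f_def h_def fk_def sum_negf)
      hence "AE t in lborel. (\<Sum>x\<in>UNIV. c x * gabor g (extend_pts \<Lambda> (a, b)) x t) = 0"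
        using A0 by simp
      hence "c None = 0" using LI unfolding lin_indep_L2_def by blast
      thus False by (simp add: c_def)
    qed
  next
    assume nd: "\<not> (AE t in lborel. d t = 0)"
    show "lin_indep_L2 (gabor g (extend_pts \<Lambda> (a, b)))"
      unfolding lin_indep_L2_def
    proof (rule allI, rule impI)
      fix c :: "'n option \<Rightarrow> complex"
      assume A: "AE t in lborel. (\<Sum>x\<in>UNIV. c x * gabor g (extend_pts \<Lambda> (a, b)) x t) = 0"
      hence A': "AE t in lborel. c None * f t + (\<Sum>k\<in>UNIV. c (Some k) * fk k t) = 0"
        by (simp add: sum_ext f_def fk_def)
      show "\<forall>x. c x = 0"
      proof (cases "c None = 0")
        case True
        hence "AE t in lborel. (\<Sum>k\<in>UNIV. c (Some k) * gabor g \<Lambda> k t) = 0"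
          using A' by (simp add: fk_def)
        hence "\<forall>k. c (Some k) = 0" using li unfolding lin_indep_L2_def
          by (erule_tac x="\<lambda>k. c (Some k)" in allE) simp
        thus ?thesis using True by (metis option.exhaust)
      next
        case False
        define \<beta> where "\<beta> k = - c (Some k) / c None" for k
        define \<psi> where "\<psi> t = (\<Sum>l\<in>UNIV. (\<beta> l - \<alpha> l) * fk l t)" for t
        have s\<psi>: "sqi \<psi>" unfolding \<psi>_def[abs_def] by (intro sqi_sum sqi_scale sk) simp
        have "AE t in lborel. d t = \<psi> t"
          using A'
        proof (rule AE_mp, intro AE_I2 impI)
          fix t assume "c None * f t + (\<Sum>k\<in>UNIV. c (Some k) * fk k t) = 0"
          hence "c None * f t = - (\<Sum>k\<in>UNIV. c (Some k) * fk k t)"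
            by (simp only: eq_neg_iff_add_eq_0)
          hence "f t = - (\<Sum>k\<in>UNIV. c (Some k) * fk k t) / c None"
            using False by (metis nonzero_mult_div_cancel_left)
          also have "\<dots> = (\<Sum>k\<in>UNIV. \<beta> k * fk k t)"
            unfolding sum_negf[symmetric] sum_divide_distrib \<beta>_def by simp
          finally have "f t = (\<Sum>k\<in>UNIV. \<beta> k * fk k t)" .
          thus "d t = \<psi> t"
            by (simp add: d_def h_def \<psi>_def left_diff_distrib sum_subtractf)
        qed
        hence "inner_L2 d d = inner_L2 d \<psi>" by (rule inner_AE_right[OF sd sd s\<psi>])
        also have "\<dots> = 0" unfolding \<psi>_def[abs_def]
          by (subst inner_sum_right) (auto simp: sk sd dk)
        finally have "D = 0" by (simp add: inner_self D_def)
        with Dzero nd show ?thesis by simp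
      qed
    qed
  qed
  with key show ?thesis by (simp add: F_def)
qed


definition tc :: "(real \<Rightarrow> complex) \<Rightarrow> bool" where
  "tc f \<longleftrightarrow> (\<forall>e>0. \<exists>d>0. \<forall>\<delta>. \<bar>\<delta>\<bar> < d \<longrightarrow> (LINT t|lborel. (cmod (f (t + \<delta>) - f t))\<^sup>2) < e)"

lemma measure_lt_of_emeasure_lt:
  assumes "emeasure lborel (S :: real set) < ennreal e" "e > 0"
  shows "measure lborel S < e"
  using assms by (metis Sigma_Algebra.measure_def enn2real_less_iff measure_zero_top
    order_le_neq_trans top_greatest)

lemma tc_indicator_set:
  assumes A: "A \<in> sets borel" "A \<subseteq> {-M..M}"
  shows "tc (\<lambda>t. indicator A t :: complex)"
  unfolding tc_def
proof (intro allI impI)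
  fix e :: real assume e: "e > 0"
  obtain U where U: "open U" "A \<subseteq> U" "emeasure lborel (U - A) < ennreal (e/4)"
    using outer_regular_lborel[OF A(1), of "e/4"] e by auto
  have "- A \<in> sets borel" using A(1) by auto
  then obtain U' where U': "open U'" "- A \<subseteq> U'" "emeasure lborel (U' - (- A)) < ennreal (e/4)"
    using outer_regular_lborel[of "- A" "e/4"] e by auto
  define T where "T = - U'"
  have Tcl: "closed T" using U' by (auto simp: T_def)
  have TA: "T \<subseteq> A" using U' by (auto simp: T_def)
  have Tc: "compact T"
    using Tcl TA A(2) by (meson bounded_closed_interval bounded_subset compact_eq_bounded_closed order_trans)
  have ATeq: "A - T = U' - (- A)" by (auto simp: T_def)
  have UT: "U - T \<subseteq> (U - A) \<union> (A - T)" by auto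
  have UTm: "U - T \<in> sets lborel" using U Tcl by auto
  have "emeasure lborel (U - T) \<le> emeasure lborel ((U - A) \<union> (A - T))"
    by (rule emeasure_mono[OF UT]) (use U Tcl A in auto)
  also have "\<dots> \<le> emeasure lborel (U - A) + emeasure lborel (A - T)"
    by (rule emeasure_subadditive) (use U Tcl A in auto)
  also have "\<dots> < ennreal (e/4 + e/4)"
    using add_mono_ennreal[OF U(3) U'(3)] ATeq by simp
  finally have emUT: "emeasure lborel (U - T) < ennreal (e/2)" by simp
  hence mUT: "measure lborel (U - T) < e/2" using e by (intro measure_lt_of_emeasure_lt) auto
  have finUT: "emeasure lborel (U - T) \<noteq> \<infinity>" using emUT by auto
  have intUT: "integrable lborel (indicator (U - T) :: real \<Rightarrow> real)"
    using UTm emUT by (intro integrable_real_indicator) (auto simp: less_top[symmetric])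
  have intUT': "integrable lborel (\<lambda>t. indicator (U - T) (t + \<delta>) :: real)" for \<delta>
    using intUT lborel_shift_integrable[of "indicator (U - T) :: real \<Rightarrow> real" \<delta>] by simp
  have "\<exists>d0>0. \<forall>x\<in>T. \<forall>y\<in>- U. d0 \<le> dist x y"
    by (rule separate_compact_closed[OF Tc]) (use U TA in auto)
  then obtain d0 where d0: "d0 > 0" "\<And>x y. x \<in> T \<Longrightarrow> y \<notin> U \<Longrightarrow> d0 \<le> dist x y" by auto
  have mv: "x + \<delta> \<in> U" if "x \<in> T" "\<bar>\<delta>\<bar> < d0" for x \<delta>
  proof (rule ccontr)
    assume "x + \<delta> \<notin> U"
    hence "d0 \<le> dist x (x + \<delta>)" using d0(2) that(1) by blast
    thus False using that(2) by (simp add: dist_real_def)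
  qed
  show "\<exists>d>0. \<forall>\<delta>. \<bar>\<delta>\<bar> < d \<longrightarrow> (LINT t|lborel. (cmod (indicator A (t + \<delta>) - indicator A t :: complex))\<^sup>2) < e"
  proof (intro exI[of _ d0] conjI allI impI d0(1))
    fix \<delta> :: real assume \<delta>: "\<bar>\<delta>\<bar> < d0"
    have pw: "(cmod (indicator A (t + \<delta>) - indicator A t :: complex))\<^sup>2
        \<le> indicator (U - T) t + indicator (U - T) (t + \<delta>)" for t
    proof (cases "t \<in> A \<longleftrightarrow> t + \<delta> \<in> A")
      case True thus ?thesis by (auto simp: indicator_def)
    next
      case False
      have "t \<in> U - T \<or> t + \<delta> \<in> U - T"
      proof (cases "t \<in> A")
        case True
        hence nA: "t + \<delta> \<notin> A" using False by blast
        show ?thesis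
        proof (cases "t \<in> T")
          case True thus ?thesis using mv[OF True \<delta>] nA TA by blast
        qed (use True U in blast)
      next
        case nt: False
        hence tdA: "t + \<delta> \<in> A" using False by blast
        show ?thesis
        proof (cases "t + \<delta> \<in> T")
          case True
          have "t + \<delta> + (- \<delta>) \<in> U" using mv[OF True, of "- \<delta>"] \<delta> by simp
          thus ?thesis using nt TA by auto
        qed (use tdA U in blast)
      qed
      thus ?thesis using False by (auto simp: indicator_def)
    qed
    have int2: "integrable lborel (\<lambda>t. indicator (U - T) t + indicator (U - T) (t + \<delta>) :: real)"
      using intUT intUT' by simp
    have "(LINT t|lborel. (cmod (indicator A (t + \<delta>) - indicator A t :: complex))\<^sup>2)
        \<le> (LINT t|lborel. indicator (U - T) t + indicator (U - T) (t + \<delta>) :: real)"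
    proof (rule integral_mono[OF _ int2 pw])
      show "integrable lborel (\<lambda>t. (cmod (indicator A (t + \<delta>) - indicator A t :: complex))\<^sup>2)"
        by (rule Bochner_Integration.integrable_bound[OF int2]) (use A pw in \<open>auto intro!: AE_I2\<close>)
    qed
    also have "\<dots> = measure lborel (U - T) + measure lborel (U - T)"
      using intUT intUT' lborel_shift_integral[of "indicator (U - T) :: real \<Rightarrow> real" \<delta>] by simp
    also have "\<dots> < e" using mUT by simp
    finally show "(LINT t|lborel. (cmod (indicator A (t + \<delta>) - indicator A t :: complex))\<^sup>2) < e" .
  qed
qed


lemma sq_sum3_le: "((a::real) + b + c)\<^sup>2 \<le> 3 * (a\<^sup>2 + b\<^sup>2 + c\<^sup>2)"
proof -
  have "0 \<le> (a - b)\<^sup>2 + (b - c)\<^sup>2 + (a - c)\<^sup>2" by simp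
  thus ?thesis by (simp add: power2_eq_square algebra_simps)
qed

lemma cmod_sq_add_le: "(cmod (a + b))\<^sup>2 \<le> 2 * (cmod a)\<^sup>2 + 2 * (cmod b)\<^sup>2"
proof -
  have "(cmod (a + b))\<^sup>2 \<le> (cmod a + cmod b)\<^sup>2" by (simp add: power_mono norm_triangle_ineq)
  also have "\<dots> \<le> 2 * (cmod a)\<^sup>2 + 2 * (cmod b)\<^sup>2" by (rule sq_sum_le)
  finally show ?thesis .
qed

lemma cmod_sq_add3_le: "(cmod (a + b + c))\<^sup>2 \<le> 3 * ((cmod a)\<^sup>2 + (cmod b)\<^sup>2 + (cmod c)\<^sup>2)"
proof -
  have "cmod (a + b + c) \<le> cmod (a + b) + cmod c" by (rule norm_triangle_ineq)
  moreover have "cmod (a + b) \<le> cmod a + cmod b" by (rule norm_triangle_ineq)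
  ultimately have "cmod (a + b + c) \<le> cmod a + cmod b + cmod c" by linarith
  hence "(cmod (a + b + c))\<^sup>2 \<le> (cmod a + cmod b + cmod c)\<^sup>2" by (simp add: power_mono)
  also have "\<dots> \<le> 3 * ((cmod a)\<^sup>2 + (cmod b)\<^sup>2 + (cmod c)\<^sup>2)" by (rule sq_sum3_le)
  finally show ?thesis .
qed

lemma sqi_diff_shift: "sqi f \<Longrightarrow> sqi (\<lambda>t. f (t + \<delta>) - f t)"
  by (intro sqi_minus sqi_shift)

lemma tcD: "tc f \<Longrightarrow> e > 0 \<Longrightarrow> \<exists>d>0. \<forall>\<delta>. \<bar>\<delta>\<bar> < d \<longrightarrow> (LINT t|lborel. (cmod (f (t + \<delta>) - f t))\<^sup>2) < e"
  unfolding tc_def by blast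

lemma tc_zero: "tc (\<lambda>t. 0)"
  unfolding tc_def by (auto intro: exI[of _ 1])

lemma tc_scale: assumes "tc f" shows "tc (\<lambda>t. c * f t)"
proof (cases "c = 0")
  case True thus ?thesis using tc_zero by simp
next
  case False
  show ?thesis unfolding tc_def
  proof (intro allI impI)
    fix e :: real assume e: "e > 0"
    have "e / (cmod c)\<^sup>2 > 0" using e False by simp
    then obtain d where d: "d > 0" "\<And>\<delta>. \<bar>\<delta>\<bar> < d \<Longrightarrow> (LINT t|lborel. (cmod (f (t + \<delta>) - f t))\<^sup>2) < e / (cmod c)\<^sup>2"
      using tcD[OF assms] by blast
    show "\<exists>d>0. \<forall>\<delta>. \<bar>\<delta>\<bar> < d \<longrightarrow> (LINT t|lborel. (cmod (c * f (t + \<delta>) - c * f t))\<^sup>2) < e"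
    proof (intro exI[of _ d] conjI allI impI d(1))
      fix \<delta> :: real assume "\<bar>\<delta>\<bar> < d"
      hence "(LINT t|lborel. (cmod (f (t + \<delta>) - f t))\<^sup>2) * (cmod c)\<^sup>2 < e"
        using d(2) False by (simp add: pos_less_divide_eq)
      moreover have "(LINT t|lborel. (cmod (c * f (t + \<delta>) - c * f t))\<^sup>2)
          = (LINT t|lborel. (cmod (f (t + \<delta>) - f t))\<^sup>2) * (cmod c)\<^sup>2"
        by (simp add: right_diff_distrib[symmetric] norm_mult power_mult_distrib mult.commute)
      ultimately show "(LINT t|lborel. (cmod (c * f (t + \<delta>) - c * f t))\<^sup>2) < e" by simp
    qed
  qed
qed

lemma tc_add:
  assumes "sqi f" "sqi h" "tc f" "tc h"
  shows "tc (\<lambda>t. f t + h t)"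
  unfolding tc_def
proof (intro allI impI)
  fix e :: real assume e: "e > 0"
  obtain d1 where d1: "d1 > 0" "\<And>\<delta>. \<bar>\<delta>\<bar> < d1 \<Longrightarrow> (LINT t|lborel. (cmod (f (t + \<delta>) - f t))\<^sup>2) < e / 4"
    using tcD[OF assms(3), of "e/4"] e by auto
  obtain d2 where d2: "d2 > 0" "\<And>\<delta>. \<bar>\<delta>\<bar> < d2 \<Longrightarrow> (LINT t|lborel. (cmod (h (t + \<delta>) - h t))\<^sup>2) < e / 4"
    using tcD[OF assms(4), of "e/4"] e by auto
  show "\<exists>d>0. \<forall>\<delta>. \<bar>\<delta>\<bar> < d \<longrightarrow> (LINT t|lborel. (cmod (f (t + \<delta>) + h (t + \<delta>) - (f t + h t)))\<^sup>2) < e"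
  proof (intro exI[of _ "min d1 d2"] conjI allI impI)
    show "min d1 d2 > 0" using d1 d2 by simp
    fix \<delta> :: real assume \<delta>: "\<bar>\<delta>\<bar> < min d1 d2"
    have i1: "integrable lborel (\<lambda>t. (cmod (f (t + \<delta>) - f t))\<^sup>2)"
      using sqi_diff_shift[OF assms(1)] by (simp add: sqi_def)
    have i2: "integrable lborel (\<lambda>t. (cmod (h (t + \<delta>) - h t))\<^sup>2)"
      using sqi_diff_shift[OF assms(2)] by (simp add: sqi_def)
    have i3: "integrable lborel (\<lambda>t. (cmod (f (t + \<delta>) + h (t + \<delta>) - (f t + h t)))\<^sup>2)"
      using sqi_diff_shift[OF sqi_add[OF assms(1,2)]] by (simp add: sqi_def)
    have "(LINT t|lborel. (cmod (f (t + \<delta>) + h (t + \<delta>) - (f t + h t)))\<^sup>2)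
        \<le> (LINT t|lborel. 2 * (cmod (f (t + \<delta>) - f t))\<^sup>2 + 2 * (cmod (h (t + \<delta>) - h t))\<^sup>2)"
    proof (rule integral_mono[OF i3])
      show "integrable lborel (\<lambda>t. 2 * (cmod (f (t + \<delta>) - f t))\<^sup>2 + 2 * (cmod (h (t + \<delta>) - h t))\<^sup>2)"
        using i1 i2 by simp
      fix t
      have eq: "f (t + \<delta>) + h (t + \<delta>) - (f t + h t) = (f (t + \<delta>) - f t) + (h (t + \<delta>) - h t)" by simp
      show "(cmod (f (t + \<delta>) + h (t + \<delta>) - (f t + h t)))\<^sup>2 \<le> 2 * (cmod (f (t + \<delta>) - f t))\<^sup>2 + 2 * (cmod (h (t + \<delta>) - h t))\<^sup>2"
        unfolding eq by (rule cmod_sq_add_le)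
    qed
    also have "\<dots> = 2 * (LINT t|lborel. (cmod (f (t + \<delta>) - f t))\<^sup>2) + 2 * (LINT t|lborel. (cmod (h (t + \<delta>) - h t))\<^sup>2)"
      using i1 i2 by simp
    also have "\<dots> < e" using d1(2)[of \<delta>] d2(2)[of \<delta>] \<delta> by simp
    finally show "(LINT t|lborel. (cmod (f (t + \<delta>) + h (t + \<delta>) - (f t + h t)))\<^sup>2) < e" .
  qed
qed

lemma tc_sum:
  assumes "finite I" "\<And>i. i \<in> I \<Longrightarrow> sqi (f i)" "\<And>i. i \<in> I \<Longrightarrow> tc (f i)"
  shows "tc (\<lambda>t. \<Sum>i\<in>I. f i t)"
  using assms
proof (induction I rule: finite_induct)
  case empty then show ?case using tc_zero by simp
next
  case (insert x F)
  have s1: "sqi (f x)" using insert by auto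
  have s2: "sqi (\<lambda>t. \<Sum>i\<in>F. f i t)" by (rule sqi_sum) (use insert in auto)
  have "tc (\<lambda>t. f x t + (\<Sum>i\<in>F. f i t))"
    by (rule tc_add[OF s1 s2]) (use insert in auto)
  thus ?case using insert by simp
qed

lemma sqi_indicator_bounded:
  assumes "S \<in> sets borel" "S \<subseteq> {-M..M}"
  shows "sqi (\<lambda>t. indicator S t :: complex)"
  unfolding sqi_def
proof
  show "(\<lambda>t. indicator S t :: complex) \<in> borel_measurable lborel" using assms(1) by simp
  have "emeasure lborel S \<le> emeasure lborel {-M..M}" by (rule emeasure_mono[OF assms(2)]) simp
  hence "emeasure lborel S < \<infinity>" using emeasure_compact_finite[of "{-M..M}"] by (simp add: le_less_trans)
  hence "integrable lborel (indicator S :: real \<Rightarrow> real)" using assms(1) by simp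
  moreover have "(\<lambda>t. (cmod (indicator S t :: complex))\<^sup>2) = indicator S"
    by (auto simp: indicator_def)
  ultimately show "integrable lborel (\<lambda>t. (cmod (indicator S t :: complex))\<^sup>2)" by simp
qed


lemma tc_simple:
  assumes sf: "simple_function lborel s" and supp: "\<And>t. s t \<noteq> 0 \<Longrightarrow> t \<in> {-M..M}"
  shows "sqi s \<and> tc s"
proof -
  define R where "R = s ` UNIV"
  have finR: "finite R" using sf unfolding R_def simple_function_def by simp
  have rep: "s = (\<lambda>t. \<Sum>y\<in>R. y * indicator (s -` {y}) t)"
  proof
    fix t
    have "(\<Sum>y\<in>R. y * indicator (s -` {y}) t) = (\<Sum>y\<in>R. if s t = y then s t else 0)"
      by (rule sum.cong) (auto simp: indicator_def)
    also have "\<dots> = s t" using finR by (simp add: sum.delta R_def)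
    finally show "s t = (\<Sum>y\<in>R. y * indicator (s -` {y}) t)" by simp
  qed
  have trm: "sqi (\<lambda>t. y * indicator (s -` {y}) t) \<and> tc (\<lambda>t. y * indicator (s -` {y}) t)" if "y \<in> R" for y
  proof (cases "y = 0")
    case True thus ?thesis using tc_zero by (simp add: sqi_def)
  next
    case False
    have meas: "s -` {y} \<in> sets borel"
      using simple_functionD(2)[OF sf, of "{y}"] by simp
    have bnd: "s -` {y} \<subseteq> {-M..M}" using supp False by auto
    show ?thesis
      using sqi_scale[OF sqi_indicator_bounded[OF meas bnd]] tc_scale[OF tc_indicator_set[OF meas bnd]]
      by auto
  qed
  have "sqi (\<lambda>t. \<Sum>y\<in>R. y * indicator (s -` {y}) t)"
    by (rule sqi_sum[OF finR]) (use trm in auto)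
  moreover have "tc (\<lambda>t. \<Sum>y\<in>R. y * indicator (s -` {y}) t)"
    by (rule tc_sum[OF finR]) (use trm in auto)
  ultimately show ?thesis using rep by metis
qed

lemma tc_approx:
  assumes sg: "sqi g"
    and ap: "\<And>e. e > 0 \<Longrightarrow> \<exists>s. sqi s \<and> tc s \<and> (LINT t|lborel. (cmod (g t - s t))\<^sup>2) < e"
  shows "tc g"
  unfolding tc_def
proof (intro allI impI)
  fix e :: real assume e: "e > 0"
  obtain s where s: "sqi s" "tc s" "(LINT t|lborel. (cmod (g t - s t))\<^sup>2) < e / 10"
    using ap[of "e/10"] e by auto
  obtain d where d: "d > 0" "\<And>\<delta>. \<bar>\<delta>\<bar> < d \<Longrightarrow> (LINT t|lborel. (cmod (s (t + \<delta>) - s t))\<^sup>2) < e / 15"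
    using tcD[OF s(2), of "e/15"] e by auto
  show "\<exists>d>0. \<forall>\<delta>. \<bar>\<delta>\<bar> < d \<longrightarrow> (LINT t|lborel. (cmod (g (t + \<delta>) - g t))\<^sup>2) < e"
  proof (intro exI[of _ d] conjI allI impI d(1))
    fix \<delta> :: real assume \<delta>: "\<bar>\<delta>\<bar> < d"
    have igs: "integrable lborel (\<lambda>t. (cmod (g t - s t))\<^sup>2)"
      using sqi_minus[OF sg s(1)] by (simp add: sqi_def)
    have igs': "integrable lborel (\<lambda>t. (cmod (g (t + \<delta>) - s (t + \<delta>)))\<^sup>2)"
      using igs lborel_shift_integrable[of "\<lambda>t. (cmod (g t - s t))\<^sup>2" \<delta>] by simp
    have is1: "integrable lborel (\<lambda>t. (cmod (s (t + \<delta>) - s t))\<^sup>2)"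
      using sqi_diff_shift[OF s(1)] by (simp add: sqi_def)
    have ig: "integrable lborel (\<lambda>t. (cmod (g (t + \<delta>) - g t))\<^sup>2)"
      using sqi_diff_shift[OF sg] by (simp add: sqi_def)
    have "(LINT t|lborel. (cmod (g (t + \<delta>) - g t))\<^sup>2)
        \<le> (LINT t|lborel. 3 * ((cmod (g (t + \<delta>) - s (t + \<delta>)))\<^sup>2 + (cmod (s (t + \<delta>) - s t))\<^sup>2 + (cmod (g t - s t))\<^sup>2))"
    proof (rule integral_mono[OF ig])
      show "integrable lborel (\<lambda>t. 3 * ((cmod (g (t + \<delta>) - s (t + \<delta>)))\<^sup>2 + (cmod (s (t + \<delta>) - s t))\<^sup>2 + (cmod (g t - s t))\<^sup>2))"
        using igs igs' is1 by simp
      fix t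
      have eq: "g (t + \<delta>) - g t = (g (t + \<delta>) - s (t + \<delta>)) + (s (t + \<delta>) - s t) + (s t - g t)" by simp
      have "cmod (s t - g t) = cmod (g t - s t)" by (rule norm_minus_commute)
      thus "(cmod (g (t + \<delta>) - g t))\<^sup>2 \<le> 3 * ((cmod (g (t + \<delta>) - s (t + \<delta>)))\<^sup>2 + (cmod (s (t + \<delta>) - s t))\<^sup>2 + (cmod (g t - s t))\<^sup>2)"
        using cmod_sq_add3_le[of "g (t + \<delta>) - s (t + \<delta>)" "s (t + \<delta>) - s t" "s t - g t"] unfolding eq by simp
    qed
    also have "\<dots> = 3 * ((LINT t|lborel. (cmod (g (t + \<delta>) - s (t + \<delta>)))\<^sup>2) + (LINT t|lborel. (cmod (s (t + \<delta>) - s t))\<^sup>2) + (LINT t|lborel. (cmod (g t - s t))\<^sup>2))"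
      using igs igs' is1 by simp
    also have "(LINT t|lborel. (cmod (g (t + \<delta>) - s (t + \<delta>)))\<^sup>2) = (LINT t|lborel. (cmod (g t - s t))\<^sup>2)"
      by (rule lborel_shift_integral[of "\<lambda>t. (cmod (g t - s t))\<^sup>2"])
    also have "3 * ((LINT t|lborel. (cmod (g t - s t))\<^sup>2) + (LINT t|lborel. (cmod (s (t + \<delta>) - s t))\<^sup>2) + (LINT t|lborel. (cmod (g t - s t))\<^sup>2)) < e"
      using s(3) d(2)[OF \<delta>] e by argo
    finally show "(LINT t|lborel. (cmod (g (t + \<delta>) - g t))\<^sup>2) < e" .
  qed
qed


lemma tail_lim:
  assumes sg: "sqi g"
  shows "(\<lambda>n::nat. LINT t|lborel. (cmod (g t))\<^sup>2 * indicator {t. real n < \<bar>t\<bar>} t) \<longlonglongrightarrow> 0"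
proof -
  have gm: "g \<in> borel_measurable lborel" and gi: "integrable lborel (\<lambda>t. (cmod (g t))\<^sup>2)"
    using sg by (auto simp: sqi_def)
  have "(\<lambda>n::nat. LINT t|lborel. (cmod (g t))\<^sup>2 * indicator {t. real n < \<bar>t\<bar>} t) \<longlonglongrightarrow> (LINT (t::real)|lborel. (0::real))"
  proof (rule integral_dominated_convergence[where w="\<lambda>t. (cmod (g t))\<^sup>2"])
    show "(\<lambda>t::real. 0::real) \<in> borel_measurable lborel" by simp
    show "(\<lambda>t. (cmod (g t))\<^sup>2 * indicator {t. real n < \<bar>t\<bar>} t) \<in> borel_measurable lborel" for n
      using gm by measurable
    show "integrable lborel (\<lambda>t. (cmod (g t))\<^sup>2)" by (rule gi)
    show "AE t in lborel. (\<lambda>n. (cmod (g t))\<^sup>2 * indicator {t. real n < \<bar>t\<bar>} t) \<longlonglongrightarrow> 0"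
    proof (rule AE_I2, rule tendsto_eventually)
      fix t :: real
      show "\<forall>\<^sub>F n in sequentially. (cmod (g t))\<^sup>2 * indicator {t. real n < \<bar>t\<bar>} t = 0"
        unfolding eventually_sequentially
      proof (intro exI[of _ "nat \<lceil>\<bar>t\<bar>\<rceil>"] allI impI)
        fix n assume "nat \<lceil>\<bar>t\<bar>\<rceil> \<le> n"
        hence "\<bar>t\<bar> \<le> real n" by linarith
        thus "(cmod (g t))\<^sup>2 * indicator {t. real n < \<bar>t\<bar>} t = 0" by (simp add: indicator_def)
      qed
    qed
    show "AE t in lborel. norm ((cmod (g t))\<^sup>2 * indicator {t. real n < \<bar>t\<bar>} t) \<le> (cmod (g t))\<^sup>2" for n
      by (rule AE_I2) (simp add: indicator_def)
  qed
  thus ?thesis by simp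
qed

lemma tc_sqi:
  assumes sg: "sqi g"
  shows "tc g"
proof (rule tc_approx[OF sg])
  fix e :: real assume e: "e > 0"
  have gm: "g \<in> borel_measurable lborel" and gi: "integrable lborel (\<lambda>t. (cmod (g t))\<^sup>2)"
    using sg by (auto simp: sqi_def)
  obtain N :: nat where N: "(LINT t|lborel. (cmod (g t))\<^sup>2 * indicator {t. real N < \<bar>t\<bar>} t) < e / 4"
  proof -
    have "\<forall>\<^sub>F n in sequentially. (LINT t|lborel. (cmod (g t))\<^sup>2 * indicator {t. real n < \<bar>t\<bar>} t) < e / 4"
      using order_tendstoD(2)[OF tail_lim[OF sg], of "e/4"] e by simp
    then obtain N where "\<And>n. n \<ge> N \<Longrightarrow> (LINT t|lborel. (cmod (g t))\<^sup>2 * indicator {t. real n < \<bar>t\<bar>} t) < e / 4"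
      unfolding eventually_sequentially by blast
    thus ?thesis using that by blast
  qed
  define M where "M = real N"
  define gM where "gM t = indicator {-M..M} t * g t" for t
  have gMm: "gM \<in> borel_measurable lborel" unfolding gM_def[abs_def] using gm by measurable
  have gMle: "cmod (gM t) \<le> cmod (g t)" for t by (simp add: gM_def indicator_def norm_mult)
  have sgM: "sqi gM" unfolding sqi_def
  proof (intro conjI gMm)
    show "integrable lborel (\<lambda>t. (cmod (gM t))\<^sup>2)"
      by (rule Bochner_Integration.integrable_bound[OF gi]) (use gMm gMle in \<open>auto intro!: AE_I2 power_mono\<close>)
  qed
  have diff: "(cmod (g t - gM t))\<^sup>2 = (cmod (g t))\<^sup>2 * indicator {t. M < \<bar>t\<bar>} t" for t
    by (cases "t \<in> {-M..M}") (auto simp: gM_def indicator_def)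
  have r: "(LINT t|lborel. (cmod (g t - gM t))\<^sup>2) < e / 4"
    using N by (simp add: diff M_def)
  obtain F where F: "\<And>i. simple_function lborel (F i)" "\<And>x. (\<lambda>i. F i x) \<longlonglongrightarrow> gM x"
    "\<And>i x. dist (F i x) 0 \<le> 2 * dist (gM x) 0"
    using borel_measurable_implies_sequence_metric[OF gMm, of 0] by auto
  have Fle: "cmod (F i x) \<le> 2 * cmod (gM x)" for i x using F(3)[of i x] by simp
  have Fm: "F i \<in> borel_measurable lborel" for i
    using borel_measurable_simple_function[OF F(1)] by simp
  have "(\<lambda>i. LINT t|lborel. (cmod (F i t - gM t))\<^sup>2) \<longlonglongrightarrow> (LINT (t::real)|lborel. (0::real))"
  proof (rule integral_dominated_convergence[where w="\<lambda>t. 9 * (cmod (g t))\<^sup>2"])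
    show "(\<lambda>t::real. 0::real) \<in> borel_measurable lborel" by simp
    show "(\<lambda>t. (cmod (F i t - gM t))\<^sup>2) \<in> borel_measurable lborel" for i
      using Fm[of i] gMm by measurable
    show "integrable lborel (\<lambda>t. 9 * (cmod (g t))\<^sup>2)" using gi by simp
    show "AE t in lborel. (\<lambda>i. (cmod (F i t - gM t))\<^sup>2) \<longlonglongrightarrow> 0"
    proof (rule AE_I2)
      fix t
      have "(\<lambda>i. (cmod (F i t - gM t))\<^sup>2) \<longlonglongrightarrow> (cmod (gM t - gM t))\<^sup>2"
        by (intro tendsto_intros F(2))
      thus "(\<lambda>i. (cmod (F i t - gM t))\<^sup>2) \<longlonglongrightarrow> 0" by simp
    qed
    show "AE t in lborel. norm ((cmod (F i t - gM t))\<^sup>2) \<le> 9 * (cmod (g t))\<^sup>2" for i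
    proof (rule AE_I2)
      fix t
      have "cmod (F i t - gM t) \<le> cmod (F i t) + cmod (gM t)" by (rule norm_triangle_ineq4)
      also have "\<dots> \<le> 3 * cmod (g t)" using Fle[of i t] gMle[of t] by linarith
      finally have "cmod (F i t - gM t) \<le> 3 * cmod (g t)" .
      hence "(cmod (F i t - gM t))\<^sup>2 \<le> (3 * cmod (g t))\<^sup>2" by (rule power_mono) simp
      thus "norm ((cmod (F i t - gM t))\<^sup>2) \<le> 9 * (cmod (g t))\<^sup>2" by (simp add: power_mult_distrib)
    qed
  qed
  hence lim: "(\<lambda>i. LINT t|lborel. (cmod (F i t - gM t))\<^sup>2) \<longlonglongrightarrow> 0" by simp
  obtain i where q: "(LINT t|lborel. (cmod (F i t - gM t))\<^sup>2) < e / 4"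
  proof -
    have "\<forall>\<^sub>F i in sequentially. (LINT t|lborel. (cmod (F i t - gM t))\<^sup>2) < e / 4"
      using order_tendstoD(2)[OF lim, of "e/4"] e by simp
    then obtain i where "(LINT t|lborel. (cmod (F i t - gM t))\<^sup>2) < e / 4"
      unfolding eventually_sequentially by blast
    thus ?thesis using that by blast
  qed
  define s where "s = F i"
  have supp: "s t \<noteq> 0 \<Longrightarrow> t \<in> {-M..M}" for t
  proof (rule ccontr)
    assume "s t \<noteq> 0" "t \<notin> {-M..M}"
    hence "gM t = 0" by (simp add: gM_def)
    thus False using Fle[of i t] \<open>s t \<noteq> 0\<close> by (simp add: s_def)
  qed
  have st: "sqi s \<and> tc s" using tc_simple[OF F(1)[of i] supp] by (simp add: s_def)
  have i1: "integrable lborel (\<lambda>t. (cmod (g t - gM t))\<^sup>2)"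
    using sqi_minus[OF sg sgM] by (simp add: sqi_def)
  have i2: "integrable lborel (\<lambda>t. (cmod (gM t - s t))\<^sup>2)"
    using sqi_minus[OF sgM] st by (simp add: sqi_def)
  have i3: "integrable lborel (\<lambda>t. (cmod (g t - s t))\<^sup>2)"
    using sqi_minus[OF sg] st by (simp add: sqi_def)
  have "(LINT t|lborel. (cmod (g t - s t))\<^sup>2) \<le> (LINT t|lborel. 2 * (cmod (g t - gM t))\<^sup>2 + 2 * (cmod (gM t - s t))\<^sup>2)"
  proof (rule integral_mono[OF i3])
    show "integrable lborel (\<lambda>t. 2 * (cmod (g t - gM t))\<^sup>2 + 2 * (cmod (gM t - s t))\<^sup>2)"
      using i1 i2 by simp
    fix t
    have eq: "g t - s t = (g t - gM t) + (gM t - s t)" by simp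
    show "(cmod (g t - s t))\<^sup>2 \<le> 2 * (cmod (g t - gM t))\<^sup>2 + 2 * (cmod (gM t - s t))\<^sup>2"
      unfolding eq by (rule cmod_sq_add_le)
  qed
  also have "\<dots> = 2 * (LINT t|lborel. (cmod (g t - gM t))\<^sup>2) + 2 * (LINT t|lborel. (cmod (gM t - s t))\<^sup>2)"
    using i1 i2 by simp
  also have "(LINT t|lborel. (cmod (gM t - s t))\<^sup>2) = (LINT t|lborel. (cmod (F i t - gM t))\<^sup>2)"
    by (simp add: s_def norm_minus_commute)
  also have "2 * (LINT t|lborel. (cmod (g t - gM t))\<^sup>2) + 2 * (LINT t|lborel. (cmod (F i t - gM t))\<^sup>2) < e"
    using r q by argo
  finally show "\<exists>s. sqi s \<and> tc s \<and> (LINT t|lborel. (cmod (g t - s t))\<^sup>2) < e"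
    using st by blast
qed


lemma E_half: "E (- (1/2)) = -1"
proof -
  have "E (- (1/2)) = cis (- pi)" unfolding E_alt cis_conv_exp by simp
  also have "\<dots> = -1" by (simp add: complex_eq_iff)
  finally show ?thesis .
qed

lemma sqi_ind_mult: assumes "sqi g" "S \<in> sets borel"
  shows "sqi (\<lambda>t. indicator S t * g t)"
  unfolding sqi_def
proof
  have gm: "g \<in> borel_measurable lborel" and gi: "integrable lborel (\<lambda>t. (cmod (g t))\<^sup>2)"
    using assms by (auto simp: sqi_def)
  show m: "(\<lambda>t. indicator S t * g t) \<in> borel_measurable lborel" using gm assms(2) by measurable
  show "integrable lborel (\<lambda>t. (cmod (indicator S t * g t))\<^sup>2)"
    by (rule Bochner_Integration.integrable_bound[OF gi]) (use m in \<open>auto intro!: AE_I2 simp: indicator_def\<close>)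
qed

lemma sqi_shiftm: "sqi g \<Longrightarrow> sqi (\<lambda>t. g (t - x))"
  using sqi_shift[of g "-x"] by simp

lemma stft_alt: "stft g g x y = (LINT t|lborel. g t * cnj (g (t - x)) * E (- (y * t)))"
  unfolding stft_def E_neg ..

lemma stft_norm_le:
  assumes sg: "sqi g"
  shows "cmod (stft g g x y) \<le> (LINT t|lborel. cmod (g t) * cmod (g (t - x)))"
proof -
  have "cmod (stft g g x y) \<le> (LINT t|lborel. norm (g t * cnj (g (t - x)) * E (- (y * t))))"
    unfolding stft_alt by (rule integral_norm_bound)
  also have "\<dots> = (LINT t|lborel. cmod (g t) * cmod (g (t - x)))"
    by (simp add: norm_mult)
  finally show ?thesis .
qed

lemma stft_x_bound:
  assumes sg: "sqi g" and n1: "(LINT t|lborel. (cmod (g t))\<^sup>2) = 1"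
    and M: "2 * M < \<bar>x\<bar>" and a: "a > 0"
  shows "cmod (stft g g x y) \<le> a * (LINT t|lborel. (cmod (g t))\<^sup>2 * indicator {t. M < \<bar>t\<bar>} t) + 1 / a"
proof -
  define r where "r = (LINT t|lborel. (cmod (g t))\<^sup>2 * indicator {t. M < \<bar>t\<bar>} t)"
  define g1 where "g1 t = indicator {t. M < \<bar>t\<bar>} t * g t" for t
  define g2 where "g2 t = indicator {t. M < \<bar>t\<bar>} (t - x) * g (t - x)" for t
  have s1: "sqi g1" unfolding g1_def[abs_def] by (rule sqi_ind_mult[OF sg]) simp
  have s2': "sqi (\<lambda>t. g1 (t - x))" by (rule sqi_shiftm[OF s1])
  have s2: "sqi g2" using s2' by (simp add: g1_def g2_def[abs_def])
  have sgx: "sqi (\<lambda>t. g (t - x))" by (rule sqi_shiftm[OF sg])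
  have n1x: "(LINT t|lborel. (cmod (g (t - x)))\<^sup>2) = 1"
    using lborel_shift_integral[of "\<lambda>t. (cmod (g t))\<^sup>2" "-x"] n1 by simp
  have r1: "(LINT t|lborel. (cmod (g1 t))\<^sup>2) = r"
    unfolding r_def g1_def by (rule Bochner_Integration.integral_cong) (auto simp: indicator_def)
  have r2: "(LINT t|lborel. (cmod (g2 t))\<^sup>2) = r"
  proof -
    have "(LINT t|lborel. (cmod (g2 t))\<^sup>2) = (LINT t|lborel. (cmod (g1 (t + (-x))))\<^sup>2)"
      by (simp add: g1_def g2_def)
    also have "\<dots> = r" using lborel_shift_integral[of "\<lambda>t. (cmod (g1 t))\<^sup>2" "-x"] r1 by simp
    finally show ?thesis .
  qed
  have pw: "cmod (g t) * cmod (g (t - x)) \<le> cmod (g1 t) * cmod (g (t - x)) + cmod (g2 t) * cmod (g t)" for t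
  proof (cases "M < \<bar>t\<bar>")
    case True thus ?thesis by (simp add: g1_def g2_def indicator_def)
  next
    case False
    hence "M < \<bar>t - x\<bar>" using M by linarith
    thus ?thesis by (simp add: g1_def g2_def indicator_def mult.commute)
  qed
  have iA: "integrable lborel (\<lambda>t. cmod (g1 t) * cmod (g (t - x)))" by (rule integrable_norm_prod[OF s1 sgx])
  have iB: "integrable lborel (\<lambda>t. cmod (g2 t) * cmod (g t))" by (rule integrable_norm_prod[OF s2 sg])
  have "cmod (stft g g x y) \<le> (LINT t|lborel. cmod (g t) * cmod (g (t - x)))" by (rule stft_norm_le[OF sg])
  also have "\<dots> \<le> (LINT t|lborel. cmod (g1 t) * cmod (g (t - x)) + cmod (g2 t) * cmod (g t))"
    by (rule integral_mono[OF integrable_norm_prod[OF sg sgx]]) (use iA iB pw in auto)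
  also have "\<dots> = (LINT t|lborel. cmod (g1 t) * cmod (g (t - x))) + (LINT t|lborel. cmod (g2 t) * cmod (g t))"
    using iA iB by simp
  also have "\<dots> \<le> (a * r + 1 / a) / 2 + (a * r + 1 / a) / 2"
    using amgm_integral[OF s1 sgx a] amgm_integral[OF s2 sg a] r1 r2 n1 n1x by simp
  also have "\<dots> = a * r + 1 / a" by simp
  finally show ?thesis by (simp add: r_def)
qed


lemma cmod_cnj_diff: "cmod (cnj u - cnj v) = cmod (u - v)"
  by (metis complex_cnj_diff complex_mod_cnj)

lemma stft_y_bound:
  assumes sg: "sqi g" and n1: "(LINT t|lborel. (cmod (g t))\<^sup>2) = 1"
    and y: "y \<noteq> 0" and a: "a > 0"
  shows "cmod (stft g g x y) \<le> (a * (LINT t|lborel. (cmod (g (t + 1 / (2 * y)) - g t))\<^sup>2) + 1 / a) / 2"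
proof -
  define \<delta> where "\<delta> = 1 / (2 * y)"
  define T where "T = (LINT t|lborel. (cmod (g (t + \<delta>) - g t))\<^sup>2)"
  define \<phi> where "\<phi> t = g t * cnj (g (t - x))" for t
  define e where "e t = E (- (y * t))" for t
  have sgx: "sqi (\<lambda>t. g (t - x))" by (rule sqi_shiftm[OF sg])
  have sgd: "sqi (\<lambda>t. g (t + \<delta>))" by (rule sqi_shift[OF sg])
  have sgxd: "sqi (\<lambda>t. g (t + \<delta> - x))" using sqi_shift[OF sgx, of \<delta>] by (simp add: algebra_simps)
  have em: "e \<in> borel_measurable lborel" unfolding e_def[abs_def] by measurable
  have en: "cmod (e t) = 1" for t by (simp add: e_def)
  have i\<phi>: "integrable lborel \<phi>" unfolding \<phi>_def[abs_def] by (rule integrable_prod[OF sg sgx])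
  have i\<phi>s: "integrable lborel (\<lambda>t. \<phi> (t + \<delta>))" using i\<phi> lborel_shift_integrable[of \<phi> \<delta>] by simp
  have i\<phi>e: "integrable lborel (\<lambda>t. \<phi> t * e t)"
    by (rule Bochner_Integration.integrable_bound[OF i\<phi>]) (use i\<phi> em en in \<open>auto simp: norm_mult\<close>)
  have i\<phi>se: "integrable lborel (\<lambda>t. \<phi> (t + \<delta>) * e t)"
    by (rule Bochner_Integration.integrable_bound[OF i\<phi>s]) (use i\<phi>s em en in \<open>auto simp: norm_mult\<close>)
  have shiftE: "e (t + \<delta>) = - e t" for t
  proof -
    have "- (y * (t + \<delta>)) = - (y * t) + - (1/2)" using y by (simp add: \<delta>_def algebra_simps)
    hence "e (t + \<delta>) = E (- (y * t)) * E (- (1/2))" by (simp add: e_def E_add)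
    thus ?thesis by (simp add: E_half e_def)
  qed
  have V: "stft g g x y = (LINT t|lborel. \<phi> t * e t)" by (simp add: stft_alt \<phi>_def e_def)
  also have "\<dots> = (LINT t|lborel. \<phi> (t + \<delta>) * e (t + \<delta>))"
    by (rule lborel_shift_integral[symmetric])
  also have "\<dots> = - (LINT t|lborel. \<phi> (t + \<delta>) * e t)" by (simp add: shiftE)
  finally have V2: "stft g g x y = - (LINT t|lborel. \<phi> (t + \<delta>) * e t)" .
  have "2 * stft g g x y = (LINT t|lborel. \<phi> t * e t) - (LINT t|lborel. \<phi> (t + \<delta>) * e t)"
    using V V2 by simp
  also have "\<dots> = (LINT t|lborel. (\<phi> t - \<phi> (t + \<delta>)) * e t)"
    using i\<phi>e i\<phi>se by (simp add: left_diff_distrib)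
  finally have V3: "2 * stft g g x y = (LINT t|lborel. (\<phi> t - \<phi> (t + \<delta>)) * e t)" .
  have "cmod (2 * stft g g x y) \<le> (LINT t|lborel. norm ((\<phi> t - \<phi> (t + \<delta>)) * e t))"
    unfolding V3 by (rule integral_norm_bound)
  also have "\<dots> = (LINT t|lborel. cmod (\<phi> t - \<phi> (t + \<delta>)))" by (simp add: norm_mult en)
  also have "\<dots> \<le> (LINT t|lborel. cmod (g t - g (t + \<delta>)) * cmod (g (t - x))
                 + cmod (g (t - x) - g (t + \<delta> - x)) * cmod (g (t + \<delta>)))"
  proof (rule integral_mono)
    show "integrable lborel (\<lambda>t. cmod (\<phi> t - \<phi> (t + \<delta>)))" using i\<phi> i\<phi>s by simp
    show "integrable lborel (\<lambda>t. cmod (g t - g (t + \<delta>)) * cmod (g (t - x))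
                 + cmod (g (t - x) - g (t + \<delta> - x)) * cmod (g (t + \<delta>)))"
      using integrable_norm_prod[OF sqi_minus[OF sg sgd] sgx] integrable_norm_prod[OF sqi_minus[OF sgx sgxd] sgd]
      by simp
    fix t
    have eq: "\<phi> t - \<phi> (t + \<delta>) = (g t - g (t + \<delta>)) * cnj (g (t - x)) + g (t + \<delta>) * cnj (g (t - x) - g (t + \<delta> - x))"
      by (simp add: \<phi>_def algebra_simps)
    have "cmod (\<phi> t - \<phi> (t + \<delta>)) \<le> cmod ((g t - g (t + \<delta>)) * cnj (g (t - x))) + cmod (g (t + \<delta>) * cnj (g (t - x) - g (t + \<delta> - x)))"
      unfolding eq by (rule norm_triangle_ineq)
    thus "cmod (\<phi> t - \<phi> (t + \<delta>)) \<le> cmod (g t - g (t + \<delta>)) * cmod (g (t - x))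
                 + cmod (g (t - x) - g (t + \<delta> - x)) * cmod (g (t + \<delta>))"
      by (simp add: norm_mult mult.commute cmod_cnj_diff)
  qed
  also have "\<dots> = (LINT t|lborel. cmod (g t - g (t + \<delta>)) * cmod (g (t - x)))
                 + (LINT t|lborel. cmod (g (t - x) - g (t + \<delta> - x)) * cmod (g (t + \<delta>)))"
    using integrable_norm_prod[OF sqi_minus[OF sg sgd] sgx] integrable_norm_prod[OF sqi_minus[OF sgx sgxd] sgd]
    by simp
  also have "\<dots> \<le> (a * T + 1 / a) / 2 + (a * T + 1 / a) / 2"
  proof (rule add_mono)
    have T1: "(LINT t|lborel. (cmod (g t - g (t + \<delta>)))\<^sup>2) = T"
      unfolding T_def by (simp add: norm_minus_commute)
    have n1x: "(LINT t|lborel. (cmod (g (t - x)))\<^sup>2) = 1"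
      using lborel_shift_integral[of "\<lambda>t. (cmod (g t))\<^sup>2" "-x"] n1 by simp
    show "(LINT t|lborel. cmod (g t - g (t + \<delta>)) * cmod (g (t - x))) \<le> (a * T + 1 / a) / 2"
      using amgm_integral[OF sqi_minus[OF sg sgd] sgx a] T1 n1x by simp
    have T2: "(LINT t|lborel. (cmod (g (t - x) - g (t + \<delta> - x)))\<^sup>2) = T"
    proof -
      have "(LINT t|lborel. (cmod (g (t - x) - g (t + \<delta> - x)))\<^sup>2)
          = (LINT t|lborel. (\<lambda>t. (cmod (g (t + \<delta>) - g t))\<^sup>2) (t + (- x)))"
        by (rule Bochner_Integration.integral_cong) (auto simp: norm_minus_commute algebra_simps)
      also have "\<dots> = T" unfolding T_def by (rule lborel_shift_integral)
      finally show ?thesis .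
    qed
    have n1d: "(LINT t|lborel. (cmod (g (t + \<delta>)))\<^sup>2) = 1"
      using lborel_shift_integral[of "\<lambda>t. (cmod (g t))\<^sup>2" "\<delta>"] n1 by simp
    show "(LINT t|lborel. cmod (g (t - x) - g (t + \<delta> - x)) * cmod (g (t + \<delta>))) \<le> (a * T + 1 / a) / 2"
      using amgm_integral[OF sqi_minus[OF sgx sgxd] sgd a] T2 n1d by simp
  qed
  finally have "2 * cmod (stft g g x y) \<le> a * T + 1 / a" by (simp add: norm_mult)
  thus ?thesis by (simp add: T_def \<delta>_def)
qed


lemma stft_decay:
  assumes sg: "sqi g" and n1: "(LINT t|lborel. (cmod (g t))\<^sup>2) = 1" and eta: "\<eta> > 0"
  shows "\<exists>R. \<forall>x y. R < norm (x, y) \<longrightarrow> cmod (stft g g x y) < \<eta>"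
proof -
  define a where "a = 2 / \<eta>"
  have a: "a > 0" using eta by (simp add: a_def)
  have ia: "1 / a = \<eta> / 2" using eta by (simp add: a_def)
  obtain N :: nat where N: "(LINT t|lborel. (cmod (g t))\<^sup>2 * indicator {t. real N < \<bar>t\<bar>} t) < \<eta>\<^sup>2 / 4"
  proof -
    have "\<forall>\<^sub>F n in sequentially. (LINT t|lborel. (cmod (g t))\<^sup>2 * indicator {t. real n < \<bar>t\<bar>} t) < \<eta>\<^sup>2 / 4"
      using order_tendstoD(2)[OF tail_lim[OF sg], of "\<eta>\<^sup>2/4"] eta by simp
    then obtain N where "(LINT t|lborel. (cmod (g t))\<^sup>2 * indicator {t. real N < \<bar>t\<bar>} t) < \<eta>\<^sup>2 / 4"
      unfolding eventually_sequentially by blast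
    thus ?thesis using that by blast
  qed
  obtain d where d: "d > 0" "\<And>\<delta>. \<bar>\<delta>\<bar> < d \<Longrightarrow> (LINT t|lborel. (cmod (g (t + \<delta>) - g t))\<^sup>2) < \<eta>\<^sup>2 / 2"
    using tcD[OF tc_sqi[OF sg], of "\<eta>\<^sup>2/2"] eta by auto
  show ?thesis
  proof (intro exI[of _ "2 * real N + 1 / (2 * d)"] allI impI)
    fix x y :: real assume R: "2 * real N + 1 / (2 * d) < norm (x, y)"
    have "norm (x, y) \<le> \<bar>x\<bar> + \<bar>y\<bar>" using norm_Pair_le[of x y] by simp
    hence "2 * real N < \<bar>x\<bar> \<or> 1 / (2 * d) < \<bar>y\<bar>" using R by linarith
    thus "cmod (stft g g x y) < \<eta>"
    proof
      assume x: "2 * real N < \<bar>x\<bar>"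
      define r where "r = (LINT t|lborel. (cmod (g t))\<^sup>2 * indicator {t. real N < \<bar>t\<bar>} t)"
      have "cmod (stft g g x y) \<le> a * r + 1 / a"
        unfolding r_def by (rule stft_x_bound[OF sg n1 x a])
      also have "a * r < a * (\<eta>\<^sup>2 / 4)" using N a by (simp add: r_def)
      also have "a * (\<eta>\<^sup>2 / 4) = \<eta> / 2" using eta by (simp add: a_def power2_eq_square)
      finally show ?thesis using ia by simp
    next
      assume y: "1 / (2 * d) < \<bar>y\<bar>"
      have y0: "y \<noteq> 0" using y d(1) by (auto simp: not_less)
      have "\<bar>1 / (2 * y)\<bar> < d"
      proof -
        have "1 < 2 * d * \<bar>y\<bar>" using y d(1) by (simp add: field_simps)
        thus ?thesis using y0 d(1) by (simp add: field_simps abs_mult)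
      qed
      hence T: "(LINT t|lborel. (cmod (g (t + 1 / (2 * y)) - g t))\<^sup>2) < \<eta>\<^sup>2 / 2" by (rule d(2))
      define T where "T = (LINT t|lborel. (cmod (g (t + 1 / (2 * y)) - g t))\<^sup>2)"
      have "cmod (stft g g x y) \<le> (a * T + 1 / a) / 2"
        unfolding T_def by (rule stft_y_bound[OF sg n1 y0 a])
      also have "a * T < a * (\<eta>\<^sup>2 / 2)" using T a by (simp add: T_def)
      hence "(a * T + 1 / a) / 2 < (a * (\<eta>\<^sup>2 / 2) + 1 / a) / 2" by simp
      also have "a * (\<eta>\<^sup>2 / 2) = \<eta>" using eta by (simp add: a_def power2_eq_square)
      finally show ?thesis using ia eta by simp
    qed
  qed
qed


lemma F_small:
  fixes u :: "complex ^'n::finite" and Minv :: "complex ^'n^'n"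
  assumes ub: "\<And>k. cmod (u $ k) \<le> \<eta>" and eta: "\<eta> \<ge> 0"
  shows "cmod (\<Sum>k\<in>UNIV. (Minv *v u) $ k * cnj (u $ k)) \<le> (\<Sum>k\<in>UNIV. \<Sum>l\<in>UNIV. cmod (Minv $ k $ l)) * \<eta>\<^sup>2"
proof -
  have vb: "cmod ((Minv *v u) $ k) \<le> (\<Sum>l\<in>UNIV. cmod (Minv $ k $ l)) * \<eta>" for k
  proof -
    have "cmod ((Minv *v u) $ k) = cmod (\<Sum>l\<in>UNIV. Minv $ k $ l * u $ l)"
      by (simp add: matrix_vector_mult_def)
    also have "\<dots> \<le> (\<Sum>l\<in>UNIV. cmod (Minv $ k $ l) * \<eta>)"
      by (rule sum_norm_le) (simp add: norm_mult mult_left_mono ub)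
    also have "\<dots> = (\<Sum>l\<in>UNIV. cmod (Minv $ k $ l)) * \<eta>" by (simp add: sum_distrib_right)
    finally show ?thesis .
  qed
  have "cmod (\<Sum>k\<in>UNIV. (Minv *v u) $ k * cnj (u $ k)) \<le> (\<Sum>k\<in>UNIV. ((\<Sum>l\<in>UNIV. cmod (Minv $ k $ l)) * \<eta>) * \<eta>)"
  proof (rule sum_norm_le)
    fix k
    have "cmod ((Minv *v u) $ k * cnj (u $ k)) = cmod ((Minv *v u) $ k) * cmod (u $ k)" by (simp add: norm_mult)
    also have "\<dots> \<le> ((\<Sum>l\<in>UNIV. cmod (Minv $ k $ l)) * \<eta>) * \<eta>"
      by (rule mult_mono[OF vb ub]) (use eta in \<open>auto intro!: sum_nonneg mult_nonneg_nonneg\<close>)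
    finally show "cmod ((Minv *v u) $ k * cnj (u $ k)) \<le> ((\<Sum>l\<in>UNIV. cmod (Minv $ k $ l)) * \<eta>) * \<eta>" .
  qed
  also have "\<dots> = (\<Sum>k\<in>UNIV. \<Sum>l\<in>UNIV. cmod (Minv $ k $ l)) * \<eta>\<^sup>2"
    by (simp add: sum_distrib_right power2_eq_square mult.assoc)
  finally show ?thesis .
qed

theorem corollary3p2:
  fixes g :: "real \<Rightarrow> complex" and \<Lambda> :: "'n::finite \<Rightarrow> real \<times> real"
  assumes "g \<in> borel_measurable lborel"
    and "integrable lborel (\<lambda>t. (cmod (g t))\<^sup>2)"
    and "(LINT t|lborel. (cmod (g t))\<^sup>2) = 1"
    and "lin_indep_L2 (gabor g \<Lambda>)"
  shows "(\<forall>a b. lin_indep_L2 (gabor g (extend_pts \<Lambda> (a, b))) \<longleftrightarrow> Re (Ffun g \<Lambda> a b) < 1)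
       \<and> (\<exists>R>0. \<forall>a b. norm (a, b) > R \<longrightarrow> lin_indep_L2 (gabor g (extend_pts \<Lambda> (a, b))))"
proof -
  have sg: "sqi g" using assms(1,2) by (simp add: sqi_def)
  have P1: "\<forall>a b. lin_indep_L2 (gabor g (extend_pts \<Lambda> (a, b))) \<longleftrightarrow> Re (Ffun g \<Lambda> a b) < 1"
    using part1[OF sg assms(3,4)] by blast
  define Minv where "Minv = matrix_inv (gram g \<Lambda>)"
  define K where "K = (\<Sum>k\<in>UNIV. \<Sum>l\<in>UNIV. cmod (Minv $ k $ l))"
  have K0: "K \<ge> 0" unfolding K_def by (intro sum_nonneg) auto
  define \<eta> where "\<eta> = 1 / (K + 1)"
  have eta: "\<eta> > 0" using K0 by (simp add: \<eta>_def)
  have Keta: "K * \<eta>\<^sup>2 < 1"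
  proof -
    have "K * \<eta>\<^sup>2 = K / (K + 1)\<^sup>2" by (simp add: \<eta>_def power_divide)
    also have "\<dots> < 1"
    proof -
      have "K < (K + 1)\<^sup>2" 
      proof -
        have "(K + 1)\<^sup>2 = K * K + 2 * K + 1" by (simp add: power2_eq_square algebra_simps)
        moreover have "K * K \<ge> 0" by simp
        ultimately show ?thesis using K0 by linarith
      qed
      thus ?thesis using K0 by (simp add: divide_less_eq)
    qed
    finally show ?thesis .
  qed
  obtain R0 where R0: "\<And>x y. R0 < norm (x, y) \<Longrightarrow> cmod (stft g g x y) < \<eta>"
    using stft_decay[OF sg assms(3) eta] by blast
  define P where "P = (\<Sum>k\<in>UNIV. norm (\<Lambda> k))"
  have Pk: "norm (\<Lambda> k) \<le> P" for k
    unfolding P_def by (rule member_le_sum) auto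
  define R where "R = max 1 (R0 + P)"
  have P2: "\<exists>R>0. \<forall>a b. norm (a, b) > R \<longrightarrow> lin_indep_L2 (gabor g (extend_pts \<Lambda> (a, b)))"
  proof (intro exI[of _ R] conjI allI impI)
    show "R > 0" by (simp add: R_def)
    fix a b :: real assume ab: "norm (a, b) > R"
    have ub: "cmod (uvec g \<Lambda> a b $ k) \<le> \<eta>" for k
    proof -
      have "norm (a, b) - norm (\<Lambda> k) \<le> norm ((a, b) - \<Lambda> k)" by (rule norm_triangle_ineq2)
      moreover have "(a, b) - \<Lambda> k = (a - fst (\<Lambda> k), b - snd (\<Lambda> k))" by (simp add: prod_eq_iff)
      ultimately have "R0 < norm (a - fst (\<Lambda> k), b - snd (\<Lambda> k))"
        using ab Pk[of k] by (simp add: R_def)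
      hence "cmod (stft g g (a - fst (\<Lambda> k)) (b - snd (\<Lambda> k))) < \<eta>" by (rule R0)
      moreover have "cmod (uvec g \<Lambda> a b $ k) = cmod (stft g g (a - fst (\<Lambda> k)) (b - snd (\<Lambda> k)))"
      proof -
        have "uvec g \<Lambda> a b $ k = E (- (fst (\<Lambda> k) * (b - snd (\<Lambda> k)))) * stft g g (a - fst (\<Lambda> k)) (b - snd (\<Lambda> k))"
          unfolding uvec_def E_neg by simp
        thus ?thesis by (simp add: norm_mult)
      qed
      ultimately show ?thesis by simp
    qed
    have "cmod (Ffun g \<Lambda> a b) \<le> K * \<eta>\<^sup>2"
      unfolding Ffun_def Let_def K_def Minv_def by (rule F_small[OF ub]) (use eta in simp)
    hence "Re (Ffun g \<Lambda> a b) < 1" using Keta abs_Re_le_cmod[of "Ffun g \<Lambda> a b"] by linarith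
    thus "lin_indep_L2 (gabor g (extend_pts \<Lambda> (a, b)))" using P1 by blast
  qed
  show ?thesis using P1 P2 by blast
qed

end
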